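(* Over all 3-periodics of $\mathcal{E}$, the triangle center $X_{100}^\dagger$ of the focus-inversive triangle moves on the circle with center and radius \[C_{100}^\dagger=\left(-c\left(1+\frac{\rho^2}{b^2}\right),0\right),\qquad R_{100}^\dagger=\rho^2\,\frac{a}{b^2}.\]
   Context: Let $a>b>0$ and let $\mathcal{E}$ be the ellipse $x^2/a^2+y^2/b^2=1$. Set $c=\sqrt{a^2-b^2}$, and let the foci be $f_1=(-c,0)$, $f_2=(c,0)$. A 3-periodic is a triangle $P_1P_2P_3$ with vertices on $\mathcal{E}$ such that at each vertex the normal to $\mathcal{E}$ bisects the angle formed by the two sides meeting at that vertex; these form a one-parameter family (one through every point of $\mathcal{E}$). Fix $\rho>0$; the focus-inversive triangle has vertices $P_i^\dagger=f_1+(\rho/d_{1,i})^2(P_i-f_1)$, $d_{1,i}=|P_i-f_1|$. $X_{100}$ is Kimberling's center $X_{100}$: the anticomplement of the Feuerbach point (the point of the circumcircle with barycentrics $a_s/(b_s-c_s):b_s/(c_s-a_s):c_s/(a_s-b_s)$, where $a_s,b_s,c_s$ are the side lengths). *)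

theory Defs
  imports Complex_Main
begin

text \<open>Points of the plane are represented as complex numbers x + i y.\<close>

definition on_ellipse :: "real \<Rightarrow> real \<Rightarrow> complex \<Rightarrow> bool" where
  "on_ellipse a b z \<longleftrightarrow> (Re z)^2 / a^2 + (Im z)^2 / b^2 = 1"

text \<open>Normal vector to the ellipse at z (gradient of the defining function, up to factor 2).\<close>
definition ellipse_normal :: "real \<Rightarrow> real \<Rightarrow> complex \<Rightarrow> complex" where
  "ellipse_normal a b z = Complex (Re z / a^2) (Im z / b^2)"

definition unit_dir :: "complex \<Rightarrow> complex \<Rightarrow> complex" where
  "unit_dir P Q = (Q - P) / of_real (cmod (Q - P))"

text \<open>At vertex P with neighbours A and B, the normal line to the ellipse at P is the
  bisector of angle APB: the internal bisector direction (sum of the unit vectors along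
  the two sides) is parallel to the normal.\<close>
definition normal_bisects :: "real \<Rightarrow> real \<Rightarrow> complex \<Rightarrow> complex \<Rightarrow> complex \<Rightarrow> bool" where
  "normal_bisects a b P A B \<longleftrightarrow>
     Im (cnj (unit_dir P A + unit_dir P B) * ellipse_normal a b P) = 0"

definition three_periodic :: "real \<Rightarrow> real \<Rightarrow> complex \<Rightarrow> complex \<Rightarrow> complex \<Rightarrow> bool" where
  "three_periodic a b P1 P2 P3 \<longleftrightarrow>
     P1 \<noteq> P2 \<and> P2 \<noteq> P3 \<and> P1 \<noteq> P3 \<and>
     on_ellipse a b P1 \<and> on_ellipse a b P2 \<and> on_ellipse a b P3 \<and>
     normal_bisects a b P1 P2 P3 \<and> normal_bisects a b P2 P3 P1 \<and>
     normal_bisects a b P3 P1 P2"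

definition inversion :: "complex \<Rightarrow> real \<Rightarrow> complex \<Rightarrow> complex" where
  "inversion f \<rho> P = f + of_real ((\<rho> / cmod (P - f))^2) * (P - f)"

definition from_barycentrics :: "complex \<Rightarrow> complex \<Rightarrow> complex \<Rightarrow> real \<Rightarrow> real \<Rightarrow> real \<Rightarrow> complex" where
  "from_barycentrics A B C w1 w2 w3 =
     (of_real w1 * A + of_real w2 * B + of_real w3 * C) / of_real (w1 + w2 + w3)"

text \<open>Kimberling's X(100): barycentrics a/(b-c) : b/(c-a) : c/(a-b), a,b,c the side lengths.\<close>
definition X100 :: "complex \<Rightarrow> complex \<Rightarrow> complex \<Rightarrow> complex" where
  "X100 A B C =
    (let sa = cmod (B - C); sb = cmod (C - A); sc = cmod (A - B)
     in from_barycentrics A B C (sa / (sb - sc)) (sb / (sc - sa)) (sc / (sa - sb)))"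

end

theory Submission
  imports Defs
begin


lemma focal_dist:
  fixes a b c :: real and P :: complex
  assumes a: "a > 0" and b: "b > 0" and c: "c \<ge> 0" "c < a" "c^2 = a^2 - b^2"
    and e: "on_ellipse a b P"
  shows "cmod (P + of_real c) = a + c / a * Re P" and "a + c / a * Re P > 0"
proof -
  have ell: "(Re P)^2 / a^2 + (Im P)^2 / b^2 = 1" using e by (simp add: on_ellipse_def)
  have im: "(Im P)^2 = b^2 - b^2 * (Re P)^2 / a^2"
    using ell b a by (simp add: field_simps)
  have "(Re P)^2 / a^2 \<le> 1" using ell b by (smt (verit) divide_nonneg_nonneg zero_le_power2)
  then have "(Re P)^2 \<le> a^2" using a by (simp add: field_simps)
  then have ra: "\<bar>Re P\<bar> \<le> a" using abs_le_square_iff[of "Re P" a] a by simp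
  have "c / a * Re P \<ge> - c" 
  proof -
    have "\<bar>c / a * Re P\<bar> = c / a * \<bar>Re P\<bar>" using a c by (simp add: abs_mult)
    also have "\<dots> \<le> c / a * a" using ra a c by (intro mult_left_mono) auto
    also have "\<dots> = c" using a by simp
    finally show ?thesis by linarith
  qed
  then show pos: "a + c / a * Re P > 0" using c by linarith
  have im2: "a^2*(Im P)^2 = a^2*b^2 - b^2*(Re P)^2" using im a by (simp add: field_simps)
  have sq': "a^2*((Re P + c)^2 + (Im P)^2) = (a^2 + c*Re P)^2" using im2 c(3) by algebra
  have "(a + c / a * Re P)^2 = (a^2 + c*Re P)^2 / a^2" using a by (simp add: field_simps power2_eq_square)
  then have sq: "(Re P + c)^2 + (Im P)^2 = (a + c / a * Re P)^2"
    using sq' a by (simp add: field_simps)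
  have "cmod (P + of_real c) = sqrt ((Re P + c)^2 + (Im P)^2)"
    by (simp add: norm_complex_def)
  also have "\<dots> = a + c / a * Re P" using sq pos by simp
  finally show "cmod (P + of_real c) = a + c / a * Re P" .
qed

definition DD :: "real \<Rightarrow> complex \<Rightarrow> complex \<Rightarrow> real" where
  "DD c P A = cmod (P + of_real c) * cmod (A + of_real c) - Re (cnj (P + of_real c) * (A + of_real c))"

lemma DD_formula:
  fixes a b c :: real and P A :: complex
  assumes a: "a > 0" and b: "b > 0" and c: "c \<ge> 0" "c < a" "c^2 = a^2 - b^2"
    and eP: "on_ellipse a b P" and eA: "on_ellipse a b A"
  shows "DD c P A = b^2 * (1 - Re P * Re A / a^2 - Im P * Im A / b^2)"
proof -
  have dP: "cmod (P + of_real c) = a + c / a * Re P" using focal_dist[OF a b c eP] by simp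
  have dA: "cmod (A + of_real c) = a + c / a * Re A" using focal_dist[OF a b c eA] by simp
  have ell: "(Re P)^2 / a^2 + (Im P)^2 / b^2 = 1" using eP by (simp add: on_ellipse_def)
  have "Re (cnj (P + of_real c) * (A + of_real c)) = (Re P + c) * (Re A + c) + Im P * Im A"
    by simp
  then have "DD c P A = (a + c / a * Re P) * (a + c / a * Re A) - ((Re P + c) * (Re A + c) + Im P * Im A)"
    unfolding DD_def dP dA by simp
  also have "\<dots> = a^2 - c^2 + (c^2/a^2 - 1) * Re P * Re A - Im P * Im A"
    using a by (simp add: field_simps power2_eq_square)
  also have "\<dots> = b^2 + (-(b^2/a^2)) * Re P * Re A - Im P * Im A"
  proof -
    have h1: "c^2/a^2 - 1 = -(b^2/a^2)" using a by (simp add: c(3) diff_divide_distrib)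
    have h2: "a^2 - c^2 = b^2" using c(3) by simp
    show ?thesis by (simp only: h1 h2)
  qed
  also have "\<dots> = b^2 * (1 - Re P * Re A / a^2 - Im P * Im A / b^2)"
    using a b by (simp add: field_simps)
  finally show ?thesis .
qed

lemma DD_pos:
  fixes a b c :: real and P A :: complex
  assumes a: "a > 0" and b: "b > 0" and c: "c \<ge> 0" "c < a" "c^2 = a^2 - b^2"
    and eP: "on_ellipse a b P" and eA: "on_ellipse a b A" and ne: "P \<noteq> A"
  shows "DD c P A > 0"
proof -
  have e1: "(Re P)^2 / a^2 + (Im P)^2 / b^2 = 1" using eP by (simp add: on_ellipse_def)
  have e2: "(Re A)^2 / a^2 + (Im A)^2 / b^2 = 1" using eA by (simp add: on_ellipse_def)
  have "(Re P - Re A)^2 / a^2 + (Im P - Im A)^2 / b^2 = ((Re P)^2 / a^2 + (Im P)^2 / b^2) + ((Re A)^2 / a^2 + (Im A)^2 / b^2)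
      - 2 * (Re P * Re A / a^2) - 2 * (Im P * Im A / b^2)"
    by (simp add: power2_diff diff_divide_distrib add_divide_distrib)
  then have "2 * (1 - Re P * Re A / a^2 - Im P * Im A / b^2) = ((Re P - Re A)^2 / a^2 + (Im P - Im A)^2 / b^2)"
    using e1 e2 by (smt (verit))
  moreover have "(Re P - Re A)^2 / a^2 + (Im P - Im A)^2 / b^2 > 0"
  proof -
    have "Re P \<noteq> Re A \<or> Im P \<noteq> Im A" using ne complex_eqI by blast
    moreover have "(Re P - Re A)^2 / a^2 \<ge> 0" "(Im P - Im A)^2 / b^2 \<ge> 0" by simp_all
    moreover have "Re P \<noteq> Re A \<Longrightarrow> (Re P - Re A)^2 / a^2 > 0" using a by simp
    moreover have "Im P \<noteq> Im A \<Longrightarrow> (Im P - Im A)^2 / b^2 > 0" using b by simp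
    ultimately show ?thesis by linarith
  qed
  ultimately show ?thesis using DD_formula[OF a b c eP eA] b by simp
qed

lemma DD_normal:
  fixes a b c :: real and P A :: complex
  assumes a: "a > 0" and b: "b > 0" and c: "c \<ge> 0" "c < a" "c^2 = a^2 - b^2"
    and eP: "on_ellipse a b P" and eA: "on_ellipse a b A"
  shows "Re (cnj (ellipse_normal a b P) * (A - P)) = - DD c P A / b^2"
proof -
  have e1: "(Re P)^2 / a^2 + (Im P)^2 / b^2 = 1" using eP by (simp add: on_ellipse_def)
  have "Re (cnj (ellipse_normal a b P) * (A - P)) = Re P / a^2 * (Re A - Re P) + Im P / b^2 * (Im A - Im P)"
    by (simp add: ellipse_normal_def)
  also have "\<dots> = Re P * Re A / a^2 + Im P * Im A / b^2 - ((Re P)^2 / a^2 + (Im P)^2 / b^2)"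
    using a b by (simp add: field_simps power2_eq_square)
  also have "\<dots> = - (1 - Re P * Re A / a^2 - Im P * Im A / b^2)"
    using e1 by simp
  finally show ?thesis using DD_formula[OF a b c eP eA] b by simp
qed

lemma bis_aux:
  fixes U V N :: complex
  assumes "cmod U = 1" "cmod V = 1" "Im (cnj (U + V) * N) = 0"
    "Re (cnj N * U) + Re (cnj N * V) \<noteq> 0"
  shows "Re (cnj N * U) = Re (cnj N * V)"
proof -
  have u: "(Re U)^2 + (Im U)^2 = 1" using assms(1) by (simp add: cmod_def)
  have v: "(Re V)^2 + (Im V)^2 = 1" using assms(2) by (simp add: cmod_def)
  have h: "(Re U + Re V) * Im N - (Im U + Im V) * Re N = 0" using assms(3) by (simp add: algebra_simps)
  have ne: "(Re U + Re V) * Re N + (Im U + Im V) * Im N \<noteq> 0" using assms(4) by (simp add: algebra_simps)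
  have id: "((Re U - Re V) * Re N + (Im U - Im V) * Im N) * ((Re U + Re V) * Re N + (Im U + Im V) * Im N)
     = ((Re U)^2 + (Im U)^2 - (Re V)^2 - (Im V)^2) * ((Re N)^2 + (Im N)^2)
       - ((Re U - Re V) * Im N - (Im U - Im V) * Re N) * ((Re U + Re V) * Im N - (Im U + Im V) * Re N)"
    by (simp add: algebra_simps power2_eq_square)
  have "((Re U - Re V) * Re N + (Im U - Im V) * Im N) * ((Re U + Re V) * Re N + (Im U + Im V) * Im N) = 0"
    using id u v h by simp
  then have "(Re U - Re V) * Re N + (Im U - Im V) * Im N = 0" using ne by simp
  then show ?thesis by (simp add: algebra_simps)
qed

lemma unit_dir_Re:
  fixes a b c :: real and P A :: complex
  assumes a: "a > 0" and b: "b > 0" and c: "c \<ge> 0" "c < a" "c^2 = a^2 - b^2"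
    and eP: "on_ellipse a b P" and eA: "on_ellipse a b A" and ne: "P \<noteq> A"
  shows "Re (cnj (ellipse_normal a b P) * unit_dir P A) = - DD c P A / (b^2 * cmod (A - P))"
proof -
  have "Re (cnj (ellipse_normal a b P) * unit_dir P A) = Re (cnj (ellipse_normal a b P) * (A - P)) / cmod (A - P)"
    unfolding unit_dir_def by (simp add: Re_divide_of_real mult.assoc[symmetric] del: of_real_diff) 
  also have "\<dots> = - DD c P A / (b^2 * cmod (A - P))"
    using DD_normal[OF a b c eP eA] by simp
  finally show ?thesis .
qed

lemma vertex_ratio:
  fixes a b c :: real and P A B :: complex
  assumes a: "a > 0" and b: "b > 0" and c: "c \<ge> 0" "c < a" "c^2 = a^2 - b^2"
    and eP: "on_ellipse a b P" and eA: "on_ellipse a b A" and eB: "on_ellipse a b B"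
    and nA: "P \<noteq> A" and nB: "P \<noteq> B" and nb: "normal_bisects a b P A B"
  shows "DD c P A / cmod (A - P) = DD c P B / cmod (B - P)"
proof -
  let ?N = "ellipse_normal a b P"
  have sA: "cmod (A - P) > 0" using nA by simp
  have sB: "cmod (B - P) > 0" using nB by simp
  have uA: "cmod (unit_dir P A) = 1" using sA unfolding unit_dir_def by (simp add: norm_divide)
  have uB: "cmod (unit_dir P B) = 1" using sB unfolding unit_dir_def by (simp add: norm_divide)
  have rA: "Re (cnj ?N * unit_dir P A) = - DD c P A / (b^2 * cmod (A - P))"
    by (rule unit_dir_Re[OF a b c eP eA nA])
  have rB: "Re (cnj ?N * unit_dir P B) = - DD c P B / (b^2 * cmod (B - P))"
    by (rule unit_dir_Re[OF a b c eP eB nB])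
  have pA: "DD c P A > 0" by (rule DD_pos[OF a b c eP eA nA])
  have pB: "DD c P B > 0" by (rule DD_pos[OF a b c eP eB nB])
  have "DD c P A / (b^2 * cmod (A - P)) > 0" using pA sA b by simp
  moreover have "DD c P B / (b^2 * cmod (B - P)) > 0" using pB sB b by simp
  ultimately have ne: "Re (cnj ?N * unit_dir P A) + Re (cnj ?N * unit_dir P B) \<noteq> 0"
    using rA rB by linarith
  have im: "Im (cnj (unit_dir P A + unit_dir P B) * ?N) = 0" using nb by (simp add: normal_bisects_def)
  have "Re (cnj ?N * unit_dir P A) = Re (cnj ?N * unit_dir P B)"
    by (rule bis_aux[OF uA uB im ne])
  then have "DD c P A / (b^2 * cmod (A - P)) = DD c P B / (b^2 * cmod (B - P))"
    using rA rB by simp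
  then show ?thesis using b sA sB by (simp add: field_simps)
qed

lemma DD_sym: "DD c P A = DD c A P"
  unfolding DD_def by (simp add: algebra_simps)

lemma inversion_dist:
  fixes F P Q :: complex and \<rho> :: real
  assumes "P \<noteq> F" "Q \<noteq> F"
  shows "cmod (inversion F \<rho> P - inversion F \<rho> Q) = \<rho>^2 * cmod (P - Q) / (cmod (P - F) * cmod (Q - F))"
proof -
  define u where "u = P - F"
  define v where "v = Q - F"
  have u0: "u \<noteq> 0" and v0: "v \<noteq> 0" using assms by (auto simp: u_def v_def)
  have "inversion F \<rho> P - inversion F \<rho> Q = of_real (\<rho>^2) * (u / of_real ((cmod u)^2) - v / of_real ((cmod v)^2))"
    unfolding inversion_def u_def[symmetric] v_def[symmetric] using u0 v0
    by (simp add: power_divide field_simps)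
  also have "u / of_real ((cmod u)^2) - v / of_real ((cmod v)^2) = 1 / cnj u - 1 / cnj v"
  proof -
    have nu: "of_real ((cmod u)^2) = u * cnj u" by (rule complex_norm_square)
    have nv: "of_real ((cmod v)^2) = v * cnj v" by (rule complex_norm_square)
    show ?thesis unfolding nu nv using u0 v0 by (simp add: field_simps)
  qed
  also have "\<dots> = cnj ((v - u) / (u * v))" using u0 v0 by (simp add: field_simps)
  finally have eq: "inversion F \<rho> P - inversion F \<rho> Q = of_real (\<rho>^2) * cnj ((v - u) / (u * v))" .
  have "cmod (inversion F \<rho> P - inversion F \<rho> Q) = \<rho>^2 * cmod ((v - u) / (u * v))"
    unfolding eq norm_mult complex_mod_cnj norm_of_real by simp
  also have "\<dots> = \<rho>^2 * cmod (P - Q) / (cmod (P - F) * cmod (Q - F))"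
    by (simp add: norm_divide norm_mult u_def v_def norm_minus_commute)
  finally show ?thesis .
qed



lemma poncelet_rel:
  fixes z w :: complex and e k :: real
  assumes z1: "cmod z = 1" and w1: "cmod w = 1" and ne: "z \<noteq> w"
    and h: "cmod ((z - of_real e * (z^2 + 1) / 2) - (w - of_real e * (w^2 + 1) / 2)) = k * (cmod (z - w))^2"
  shows "(2 - of_real e * (z + w)) * (2 * z * w - of_real e * (z + w)) + of_real (4 * k^2) * (z - w)^2 = 0"
proof -
  have z0: "z \<noteq> 0" using z1 by auto
  have w0: "w \<noteq> 0" using w1 by auto
  have cz: "cnj z = inverse z"
    using z1 z0 complex_norm_square[of z] by (simp add: field_simps)
  have cw: "cnj w = inverse w"
    using w1 w0 complex_norm_square[of w] by (simp add: field_simps)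
  define X where "X = (z - of_real e * (z^2 + 1) / 2) - (w - of_real e * (w^2 + 1) / 2)"
  have n1: "of_real ((cmod X)^2) = X * cnj X" by (rule complex_norm_square)
  have n2: "of_real ((cmod (z - w))^2) = (z - w) * cnj (z - w)" by (rule complex_norm_square)
  have "of_real ((cmod X)^2) = of_real (k^2) * (of_real ((cmod (z - w))^2) :: complex)^2"
    using h X_def by (simp add: power_mult_distrib)
  then have E: "X * cnj X = of_real (k^2) * ((z - w) * cnj (z - w))^2" unfolding n1 n2 .
  let ?s = "z + w"
  have xe: "X = (z - w) * (2 - of_real e * ?s) / 2"
    unfolding X_def by (simp add: field_simps power2_eq_square)
  have cX: "cnj X = (w - z) * (2 * z * w - of_real e * ?s) / (2 * z^2 * w^2)"
    unfolding X_def using z0 w0 by (simp add: cz cw field_simps power2_eq_square)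
  have cn: "(z - w) * cnj (z - w) = -((z - w)^2) / (z * w)"
    using z0 w0 by (simp add: cz cw field_simps power2_eq_square)
  have E2: "((z - w) * (2 - of_real e * ?s) / 2) * ((w - z) * (2 * z * w - of_real e * ?s) / (2 * z^2 * w^2))
      = of_real (k^2) * (-((z - w)^2) / (z * w))^2"
  proof -
    have E1: "X * ((w - z) * (2 * z * w - of_real e * ?s) / (2 * z^2 * w^2)) = of_real (k^2) * (-((z - w)^2) / (z * w))^2"
      using E by (simp only: cX cn)
    show ?thesis using E1 by (simp only: xe)
  qed
  have l: "((z - w) * (2 - of_real e * ?s) / 2) * ((w - z) * (2 * z * w - of_real e * ?s) / (2 * z^2 * w^2)) * (4 * z^2 * w^2)
       = -((z - w)^2) * ((2 - of_real e * ?s) * (2 * z * w - of_real e * ?s))"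
    using z0 w0 by (simp add: field_simps power2_eq_square)
  have r: "of_real (k^2) * (-((z - w)^2) / (z * w))^2 * (4 * z^2 * w^2) = of_real (4 * k^2) * (z - w)^2 * (z - w)^2"
    using z0 w0 by (simp add: field_simps power2_eq_square)
  have "(z - w)^2 * ((2 - of_real e * (z + w)) * (2 * z * w - of_real e * (z + w)) + of_real (4 * k^2) * (z - w)^2) = 0"
  proof -
    let ?M = "4 * z^2 * w^2"
    have "((z - w) * (2 - of_real e * ?s) / 2) * ((w - z) * (2 * z * w - of_real e * ?s) / (2 * z^2 * w^2)) * ?M
       = of_real (k^2) * (-((z - w)^2) / (z * w))^2 * ?M"
      using E2 by (rule arg_cong[where f="\<lambda>t. t * (4 * z^2 * w^2)"])
    then have "-((z - w)^2) * ((2 - of_real e * ?s) * (2 * z * w - of_real e * ?s)) = of_real (4 * k^2) * (z - w)^2 * (z - w)^2"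
      by (simp only: l r)
    then show ?thesis by algebra
  qed
  then show ?thesis using ne by simp
qed

definition EE :: "real \<Rightarrow> real \<Rightarrow> complex \<Rightarrow> complex \<Rightarrow> complex" where
  "EE e l a b = (2 - of_real e * (a + b)) * (2 * a * b - of_real e * (a + b)) + of_real l * (a - b)^2"

lemma EE_sym: "EE e l a b = EE e l b a"
  unfolding EE_def by (simp add: algebra_simps power2_commute)

lemma sigma_real:
  fixes z1 z2 z3 :: complex and e l :: real
  assumes n12: "z1 \<noteq> z2" and n23: "z2 \<noteq> z3" and n13: "z1 \<noteq> z3" and e0: "e \<noteq> 0"
    and h12: "EE e l z1 z2 = 0" and h23: "EE e l z2 z3 = 0" and h13: "EE e l z1 z3 = 0"
  shows "z1 + z2 + z3 = of_real ((e^2 - 3 * l + 4) / (2 * e))"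
proof -
  let ?a = "of_real e :: complex" and ?b = "of_real l :: complex"
  define L1 where "L1 = -2*z1^2*?a - 2*z1*z2*?a - 2*z1*z3*?a + 2*z1*?a^2 - 2*z1*?b + 4*z1 + z2*?a^2 + z2*?b + z3*?a^2 + z3*?b - 2*?a"
  define L2 where "L2 = -2*z2^2*?a - 2*z2*z1*?a - 2*z2*z3*?a + 2*z2*?a^2 - 2*z2*?b + 4*z2 + z1*?a^2 + z1*?b + z3*?a^2 + z3*?b - 2*?a"
  have i1: "EE e l z1 z2 - EE e l z1 z3 = (z2 - z3) * L1"
    unfolding EE_def L1_def by (simp add: algebra_simps power2_eq_square)
  have i2: "EE e l z2 z1 - EE e l z2 z3 = (z1 - z3) * L2"
    unfolding EE_def L2_def by (simp add: algebra_simps power2_eq_square)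
  have "L1 = 0" using i1 h12 h13 n23 by simp
  moreover have "L2 = 0" using i2 h12 h23 n13 EE_sym[of e l z2 z1] by simp
  moreover have i3: "L1 - L2 = (z1 - z2) * (-2 * ?a * (z1 + z2 + z3) + ?a^2 - 3 * ?b + 4)"
    unfolding L1_def L2_def by (simp add: algebra_simps power2_eq_square)
  ultimately have "-2 * ?a * (z1 + z2 + z3) + ?a^2 - 3 * ?b + 4 = 0" using n12 by simp
  then have "2 * ?a * (z1 + z2 + z3) = ?a^2 - 3 * ?b + 4" by (simp add: algebra_simps)
  then show ?thesis using e0 by (simp add: field_simps)
qed

lemma final_alg:
  fixes z1 z2 z3 :: complex and e :: real
  assumes u1: "z1 \<noteq> 0" and u2: "z2 \<noteq> 0" and u3: "z3 \<noteq> 0"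
    and n12: "z1 \<noteq> z2" and n23: "z2 \<noteq> z3" and n13: "z1 \<noteq> z3"
    and g: "(z1 + z2 + z3) * (z1 * z2 * z3) = z1 * z2 + z2 * z3 + z3 * z1"
    and d1: "z1^2 - z2 * z3 \<noteq> 0" and d2: "z2^2 - z3 * z1 \<noteq> 0" and d3: "z3^2 - z1 * z2 \<noteq> 0"
  defines "w1 \<equiv> z1 * (z2 - z3) / (z1^2 - z2 * z3)"
    and "w2 \<equiv> z2 * (z3 - z1) / (z2^2 - z3 * z1)"
    and "w3 \<equiv> z3 * (z1 - z2) / (z3^2 - z1 * z2)"
  shows "w1 + w2 + w3 \<noteq> 0"
    and "w1 * (of_real e + z1 - of_real e * (z1^2 + 1) / 2) + w2 * (of_real e + z2 - of_real e * (z2^2 + 1) / 2)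
         + w3 * (of_real e + z3 - of_real e * (z3^2 + 1) / 2) = (z1 * z2 * z3) * (w1 + w2 + w3)"
proof -
  let ?s1 = "z1 + z2 + z3" and ?s2 = "z1 * z2 + z2 * z3 + z3 * z1" and ?s3 = "z1 * z2 * z3"
  let ?D1 = "z1^2 - z2 * z3" and ?D2 = "z2^2 - z3 * z1" and ?D3 = "z3^2 - z1 * z2"
  let ?V = "(z1 - z2) * (z2 - z3) * (z3 - z1)"
  have V0: "?V \<noteq> 0" using n12 n23 n13 by simp
  have s3: "?s3 \<noteq> 0" using u1 u2 u3 by simp
  have "?D1 = ?s1 * (z1 - ?s3) + (?s1 * ?s3 - ?s2)" by (simp add: algebra_simps power2_eq_square)
  then have "?D1 = ?s1 * (z1 - ?s3)" using g by simp
  then have s1: "?s1 \<noteq> 0" using d1 by auto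
  have s2: "?s2 \<noteq> 0" using g s1 s3 by (metis mult_eq_0_iff)
  have sumid: "z1 * (z2 - z3) * ?D2 * ?D3 + z2 * (z3 - z1) * ?D1 * ?D3 + z3 * (z1 - z2) * ?D1 * ?D2 = - ?V * ?s1 * ?s2"
    by (simp add: algebra_simps power2_eq_square)
  have e1: "w1 * ?D1 = z1 * (z2 - z3)" unfolding w1_def using d1 by simp
  have e2: "w2 * ?D2 = z2 * (z3 - z1)" unfolding w2_def using d2 by simp
  have e3: "w3 * ?D3 = z3 * (z1 - z2)" unfolding w3_def using d3 by simp
  have "(w1 + w2 + w3) * (?D1 * ?D2 * ?D3) = (w1 * ?D1) * ?D2 * ?D3 + (w2 * ?D2) * ?D1 * ?D3 + (w3 * ?D3) * ?D1 * ?D2"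
    by (simp add: algebra_simps)
  also have "\<dots> = - ?V * ?s1 * ?s2" unfolding e1 e2 e3 by (rule sumid)
  finally have "(w1 + w2 + w3) * (?D1 * ?D2 * ?D3) \<noteq> 0" using V0 s1 s2 by simp
  then show "w1 + w2 + w3 \<noteq> 0" by auto
  let ?f = "\<lambda>z. 2 * of_real e + 2 * z - of_real e * (z^2 + 1) - 2 * ?s3"
  have numid: "z1 * (z2 - z3) * ?D2 * ?D3 * ?f z1 + z2 * (z3 - z1) * ?D1 * ?D3 * ?f z2 + z3 * (z1 - z2) * ?D1 * ?D2 * ?f z3
     = (?s1 * ?s3 - ?s2) * ?V * (2 * ?s2 + of_real e * ?s1)"
    by (simp add: algebra_simps power2_eq_square)
  then have numid0: "z1 * (z2 - z3) * ?D2 * ?D3 * ?f z1 + z2 * (z3 - z1) * ?D1 * ?D3 * ?f z2 + z3 * (z1 - z2) * ?D1 * ?D2 * ?f z3 = 0"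
    using g by simp
  have "(w1 * ?f z1 + w2 * ?f z2 + w3 * ?f z3) * (?D1 * ?D2 * ?D3) = 
     (w1 * ?D1) * ?D2 * ?D3 * ?f z1 + (w2 * ?D2) * ?D1 * ?D3 * ?f z2 + (w3 * ?D3) * ?D1 * ?D2 * ?f z3"
    by (simp add: algebra_simps)
  also have "\<dots> = 0" unfolding e1 e2 e3 by (rule numid0)
  finally have F0: "w1 * ?f z1 + w2 * ?f z2 + w3 * ?f z3 = 0" using d1 d2 d3 by simp
  have T: "2 * ((w1 * (of_real e + z1 - of_real e * (z1^2 + 1) / 2) + w2 * (of_real e + z2 - of_real e * (z2^2 + 1) / 2)
         + w3 * (of_real e + z3 - of_real e * (z3^2 + 1) / 2)) - (z1 * z2 * z3) * (w1 + w2 + w3))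
     = w1 * ?f z1 + w2 * ?f z2 + w3 * ?f z3"
    by (simp add: field_simps)
  have H: "\<And>x y::complex. 2 * x = y \<Longrightarrow> y = 0 \<Longrightarrow> x = 0" by simp
  from H[OF T F0] show "w1 * (of_real e + z1 - of_real e * (z1^2 + 1) / 2) + w2 * (of_real e + z2 - of_real e * (z2^2 + 1) / 2)
         + w3 * (of_real e + z3 - of_real e * (z3^2 + 1) / 2) = (z1 * z2 * z3) * (w1 + w2 + w3)"
    by (simp only: right_minus_eq)
qed



lemma unit_of_norm:
  fixes z :: complex assumes "cmod z = 1" shows "cnj z = inverse z" "z \<noteq> 0"
proof -
  show z0: "z \<noteq> 0" using assms by auto
  show "cnj z = inverse z" using assms z0 complex_norm_square[of z] by (simp add: field_simps)
qed

lemma delta_eq: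
  fixes z w :: complex assumes "cmod z = 1" "cmod w = 1"
  shows "of_real ((cmod (z - w))^2) = - ((z - w)^2) / (z * w)"
proof -
  have cz: "cnj z = inverse z" and z0: "z \<noteq> 0" using unit_of_norm[OF assms(1)] by auto
  have cw: "cnj w = inverse w" and w0: "w \<noteq> 0" using unit_of_norm[OF assms(2)] by auto
  have "of_real ((cmod (z - w))^2) = (z - w) * cnj (z - w)" by (rule complex_norm_square)
  also have "\<dots> = - ((z - w)^2) / (z * w)" using z0 w0 by (simp add: cz cw field_simps power2_eq_square)
  finally show ?thesis .
qed

lemma unit_diff_sq:
  fixes z w :: complex assumes "cmod z = 1" "cmod w = 1"
  shows "(cmod (z - w))^2 = 2 - 2 * Re (cnj z * w)"
proof -
  have "(Re z)^2 + (Im z)^2 = 1" using assms(1) by (simp add: cmod_def)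
  moreover have "(Re w)^2 + (Im w)^2 = 1" using assms(2) by (simp add: cmod_def)
  ultimately show ?thesis by (simp add: cmod_power2 power2_diff algebra_simps)
qed

lemma Q_form:
  fixes a b c \<rho> :: real and P :: complex
  assumes a: "a > 0" and b: "b > 0" and c: "c \<ge> 0" "c < a" "c^2 = a^2 - b^2"
    and eP: "on_ellipse a b P"
  defines "d \<equiv> cmod (P + of_real c)"
  defines "z \<equiv> (P + of_real c) / of_real d"
  shows "inversion (- of_real c) \<rho> P - Complex (- c * (1 + \<rho>^2 / b^2)) 0
           = of_real (\<rho>^2 * a / b^2) * (of_real (c / a) + z - of_real (c / a) * (z^2 + 1) / 2)"
    and "cmod z = 1" and "d > 0" and "P + of_real c = of_real d * z"
proof -
  have dd: "d = a + c / a * Re P" using focal_dist[OF a b c eP] d_def by simp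
  show dpos: "d > 0" using focal_dist[OF a b c eP] d_def by simp
  show z1: "cmod z = 1" unfolding z_def using dpos d_def by (simp add: norm_divide)
  show Pz: "P + of_real c = of_real d * z" unfolding z_def using dpos by simp
  have cz: "cnj z = inverse z" and z0: "z \<noteq> 0" using unit_of_norm[OF z1] by auto
  have rez: "Re z = (Re P + c) / d" unfolding z_def by (simp add: Re_divide_of_real)
  have zz: "z^2 + 1 = of_real (2 * Re z) * z"
  proof -
    have "of_real (2 * Re z) = z + cnj z" by (simp add: complex_add_cnj)
    then show ?thesis using z0 by (simp add: cz field_simps power2_eq_square)
  qed
  have key: "\<rho>^2 * a / b^2 * (1 - c / a * Re z) = \<rho>^2 / d"
  proof -
    have "1 - c / a * Re z = b^2 / (a * d)"
      unfolding rez using dpos a b c(3) dd by (simp add: field_simps power2_eq_square)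
    then show ?thesis using a b dpos by (simp add: field_simps power2_eq_square)
  qed
  have inv: "inversion (- of_real c) \<rho> P = - of_real c + of_real (\<rho>^2 / d) * z"
    unfolding inversion_def using dpos d_def[symmetric] Pz by (simp add: power_divide power2_eq_square)
  have cc: "Complex (- c * (1 + \<rho>^2 / b^2)) 0 = - of_real c - of_real (\<rho>^2 * a / b^2 * (c / a))"
    using a by (simp add: complex_eq_iff field_simps)
  have "of_real (\<rho>^2 * a / b^2) * (of_real (c / a) + z - of_real (c / a) * (z^2 + 1) / 2)
      = of_real (\<rho>^2 * a / b^2 * (c / a)) + of_real (\<rho>^2 * a / b^2 * (1 - c / a * Re z)) * z"
  proof -
    have "complex_of_real a \<noteq> 0" "complex_of_real b \<noteq> 0" using a b by auto
    then show ?thesis unfolding zz by (simp add: field_simps)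
  qed
  also have "\<dots> = of_real (\<rho>^2 * a / b^2 * (c / a)) + of_real (\<rho>^2 / d) * z" unfolding key ..
  finally show "inversion (- of_real c) \<rho> P - Complex (- c * (1 + \<rho>^2 / b^2)) 0
           = of_real (\<rho>^2 * a / b^2) * (of_real (c / a) + z - of_real (c / a) * (z^2 + 1) / 2)"
    unfolding inv cc by simp
qed

lemma side_z:
  fixes c \<rho> r dP dQ :: real and P Q zP zQ :: complex
  assumes dP: "dP > 0" "cmod (P + of_real c) = dP" "P + of_real c = of_real dP * zP" "cmod zP = 1"
    and dQ: "dQ > 0" "cmod (Q + of_real c) = dQ" "Q + of_real c = of_real dQ * zQ" "cmod zQ = 1"
    and r: "r > 0" "DD c P Q = r * cmod (P - Q)"
  shows "cmod (inversion (- of_real c) \<rho> P - inversion (- of_real c) \<rho> Q) = \<rho>^2 / (2 * r) * (cmod (zP - zQ))^2"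
proof -
  have "DD c P Q = dP * dQ - Re (cnj (of_real dP * zP) * (of_real dQ * zQ))"
    unfolding DD_def using dP dQ by simp
  also have "\<dots> = dP * dQ * (1 - Re (cnj zP * zQ))" by (simp add: algebra_simps)
  also have "\<dots> = dP * dQ * (cmod (zP - zQ))^2 / 2" using unit_diff_sq[OF dP(4) dQ(4)] by simp
  finally have dd: "DD c P Q = dP * dQ * (cmod (zP - zQ))^2 / 2" .
  have pf: "P \<noteq> - of_real c" using dP by (metis add_eq_0_iff2 norm_zero order_less_irrefl)
  have qf: "Q \<noteq> - of_real c" using dQ by (metis add_eq_0_iff2 norm_zero order_less_irrefl)
  have "cmod (inversion (- of_real c) \<rho> P - inversion (- of_real c) \<rho> Q) = \<rho>^2 * cmod (P - Q) / (dP * dQ)"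
    using inversion_dist[OF pf qf, of \<rho>] dP dQ by simp
  also have "cmod (P - Q) = dP * dQ * (cmod (zP - zQ))^2 / (2 * r)" using dd r by (simp add: field_simps)
  finally show ?thesis using dP dQ by (simp add: field_simps)
qed



lemma div_helper: "y \<noteq> 0 \<Longrightarrow> x = w * y \<Longrightarrow> x / y = (w::'a::field)"
  by simp

lemma main_gen:
  fixes a b c \<rho> :: real and P1 P2 P3 :: complex
  assumes ab: "a > b" and b: "b > 0" and rho: "\<rho> > 0"
    and c: "c > 0" "c < a" "c^2 = a^2 - b^2"
    and tp: "three_periodic a b P1 P2 P3"
    and h5: "cmod (inversion (- of_real c) \<rho> P1 - inversion (- of_real c) \<rho> P2)
         \<noteq> cmod (inversion (- of_real c) \<rho> P2 - inversion (- of_real c) \<rho> P3)"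
    and h6: "cmod (inversion (- of_real c) \<rho> P2 - inversion (- of_real c) \<rho> P3)
         \<noteq> cmod (inversion (- of_real c) \<rho> P3 - inversion (- of_real c) \<rho> P1)"
    and h7: "cmod (inversion (- of_real c) \<rho> P3 - inversion (- of_real c) \<rho> P1)
         \<noteq> cmod (inversion (- of_real c) \<rho> P1 - inversion (- of_real c) \<rho> P2)"
  shows "cmod (X100 (inversion (- of_real c) \<rho> P1) (inversion (- of_real c) \<rho> P2) (inversion (- of_real c) \<rho> P3)
               - Complex (- c * (1 + \<rho>^2 / b^2)) 0) = \<rho>^2 * a / b^2"
proof -
  have a: "a > 0" using ab b by simp
  have c': "c \<ge> 0" "c < a" "c^2 = a^2 - b^2" using c by auto
  have n12: "P1 \<noteq> P2" and n23: "P2 \<noteq> P3" and n13: "P1 \<noteq> P3"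
    and e1: "on_ellipse a b P1" and e2: "on_ellipse a b P2" and e3: "on_ellipse a b P3"
    and nb1: "normal_bisects a b P1 P2 P3" and nb2: "normal_bisects a b P2 P3 P1"
    using tp unfolding three_periodic_def by auto
  define Q1 where "Q1 = inversion (- of_real c) \<rho> P1"
  define Q2 where "Q2 = inversion (- of_real c) \<rho> P2"
  define Q3 where "Q3 = inversion (- of_real c) \<rho> P3"
  define Cc where "Cc = Complex (- c * (1 + \<rho>^2 / b^2)) 0"
  define K where "K = \<rho>^2 * a / b^2"
  define e where "e = c / a"
  define d1 where "d1 = cmod (P1 + of_real c)"
  define d2 where "d2 = cmod (P2 + of_real c)"
  define d3 where "d3 = cmod (P3 + of_real c)"
  define z1 where "z1 = (P1 + of_real c) / of_real d1"
  define z2 where "z2 = (P2 + of_real c) / of_real d2"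
  define z3 where "z3 = (P3 + of_real c) / of_real d3"
  define G where "G = (\<lambda>z::complex. of_real e + z - of_real e * (z^2 + 1) / 2)"
  note qf1a = Q_form(1)[OF a b c' e1, of \<rho>, folded d1_def, folded z1_def, folded Q1_def Cc_def K_def e_def]
  note qf1 = qf1a Q_form(2-4)[OF a b c' e1, folded d1_def, folded z1_def]
  note qf2a = Q_form(1)[OF a b c' e2, of \<rho>, folded d2_def, folded z2_def, folded Q2_def Cc_def K_def e_def]
  note qf2 = qf2a Q_form(2-4)[OF a b c' e2, folded d2_def, folded z2_def]
  note qf3a = Q_form(1)[OF a b c' e3, of \<rho>, folded d3_def, folded z3_def, folded Q3_def Cc_def K_def e_def]
  note qf3 = qf3a Q_form(2-4)[OF a b c' e3, folded d3_def, folded z3_def]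
  have Q1e: "Q1 = Cc + of_real K * G z1" using qf1(1) unfolding G_def by (simp add: algebra_simps)
  have Q2e: "Q2 = Cc + of_real K * G z2" using qf2(1) unfolding G_def by (simp add: algebra_simps)
  have Q3e: "Q3 = Cc + of_real K * G z3" using qf3(1) unfolding G_def by (simp add: algebra_simps)
  have K0: "K > 0" unfolding K_def using rho a b by simp
  have e0: "e > 0" unfolding e_def using a c by simp
  define r where "r = DD c P1 P2 / cmod (P2 - P1)"
  have vr1: "DD c P1 P2 / cmod (P2 - P1) = DD c P1 P3 / cmod (P3 - P1)"
    by (rule vertex_ratio[OF a b c' e1 e2 e3 n12 n13 nb1])
  have vr2: "DD c P2 P3 / cmod (P3 - P2) = DD c P2 P1 / cmod (P1 - P2)"
    by (rule vertex_ratio[OF a b c' e2 e3 e1 n23 n12[symmetric] nb2])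
  have rpos: "r > 0" unfolding r_def using DD_pos[OF a b c' e1 e2 n12] n12 by simp
  have s12: "cmod (P2 - P1) > 0" "cmod (P1 - P2) > 0" using n12 by auto
  have s13: "cmod (P3 - P1) > 0" "cmod (P1 - P3) > 0" using n13 by auto
  have s23: "cmod (P3 - P2) > 0" "cmod (P2 - P3) > 0" using n23 by auto
  have D12: "DD c P1 P2 = r * cmod (P1 - P2)"
    unfolding r_def using s12 by (simp add: norm_minus_commute)
  have D13: "DD c P1 P3 = r * cmod (P1 - P3)"
    using vr1 s12 s13 unfolding r_def by (simp add: norm_minus_commute field_simps)
  have D23: "DD c P2 P3 = r * cmod (P2 - P3)"
    using vr2 s12 s23 DD_sym[of c P2 P1] unfolding r_def by (simp add: norm_minus_commute field_simps)
  define \<kappa> where "\<kappa> = \<rho>^2 / (2 * r)"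
  have kap: "\<kappa> > 0" unfolding \<kappa>_def using rho rpos by simp
  have sd12: "cmod (Q1 - Q2) = \<kappa> * (cmod (z1 - z2))^2"
    unfolding Q1_def Q2_def \<kappa>_def
    by (rule side_z[OF qf1(3) d1_def[symmetric] qf1(4) qf1(2) qf2(3) d2_def[symmetric] qf2(4) qf2(2) rpos D12])
  have sd13: "cmod (Q1 - Q3) = \<kappa> * (cmod (z1 - z3))^2"
    unfolding Q1_def Q3_def \<kappa>_def
    by (rule side_z[OF qf1(3) d1_def[symmetric] qf1(4) qf1(2) qf3(3) d3_def[symmetric] qf3(4) qf3(2) rpos D13])
  have sd23: "cmod (Q2 - Q3) = \<kappa> * (cmod (z2 - z3))^2"
    unfolding Q2_def Q3_def \<kappa>_def
    by (rule side_z[OF qf2(3) d2_def[symmetric] qf2(4) qf2(2) qf3(3) d3_def[symmetric] qf3(4) qf3(2) rpos D23])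
  have pf1: "P1 \<noteq> - of_real c" using qf1(3) d1_def by auto
  have pf2: "P2 \<noteq> - of_real c" using qf2(3) d2_def by auto
  have pf3: "P3 \<noteq> - of_real c" using qf3(3) d3_def by auto
  have dp1: "cmod (P1 + of_real c) > 0" using qf1(3) d1_def by simp
  have dp2: "cmod (P2 + of_real c) > 0" using qf2(3) d2_def by simp
  have dp3: "cmod (P3 + of_real c) > 0" using qf3(3) d3_def by simp
  have q12: "cmod (Q1 - Q2) > 0"
    unfolding Q1_def Q2_def using inversion_dist[OF pf1 pf2, of \<rho>] n12 rho dp1 dp2 by simp
  have q13: "cmod (Q1 - Q3) > 0"
    unfolding Q1_def Q3_def using inversion_dist[OF pf1 pf3, of \<rho>] n13 rho dp1 dp3 by simp
  have q23: "cmod (Q2 - Q3) > 0"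
    unfolding Q2_def Q3_def using inversion_dist[OF pf2 pf3, of \<rho>] n23 rho dp2 dp3 by simp
  have zn12: "z1 \<noteq> z2" using q12 sd12 by auto
  have zn13: "z1 \<noteq> z3" using q13 sd13 by auto
  have zn23: "z2 \<noteq> z3" using q23 sd23 by auto
  define k where "k = \<kappa> / K"
  have gd: "\<And>Qa Qb za zb. Qa = Cc + of_real K * G za \<Longrightarrow> Qb = Cc + of_real K * G zb \<Longrightarrow>
      cmod (Qa - Qb) = \<kappa> * (cmod (za - zb))^2 \<Longrightarrow>
      cmod ((za - of_real e * (za^2 + 1) / 2) - (zb - of_real e * (zb^2 + 1) / 2)) = k * (cmod (za - zb))^2"
  proof -
    fix Qa Qb za zb
    assume qa: "Qa = Cc + of_real K * G za" and qb: "Qb = Cc + of_real K * G zb"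
      and s: "cmod (Qa - Qb) = \<kappa> * (cmod (za - zb))^2"
    have "Qa - Qb = of_real K * ((za - of_real e * (za^2 + 1) / 2) - (zb - of_real e * (zb^2 + 1) / 2))"
      unfolding qa qb G_def by (simp add: algebra_simps)
    then have "cmod (Qa - Qb) = K * cmod ((za - of_real e * (za^2 + 1) / 2) - (zb - of_real e * (zb^2 + 1) / 2))"
      using K0 by (simp add: norm_mult)
    then show "cmod ((za - of_real e * (za^2 + 1) / 2) - (zb - of_real e * (zb^2 + 1) / 2)) = k * (cmod (za - zb))^2"
      using s K0 unfolding k_def by (simp add: field_simps)
  qed
  define l where "l = 4 * k^2"
  have E12: "EE e l z1 z2 = 0"
    using poncelet_rel[OF qf1(2) qf2(2) zn12 gd[OF Q1e Q2e sd12]] unfolding EE_def l_def .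
  have E13: "EE e l z1 z3 = 0"
    using poncelet_rel[OF qf1(2) qf3(2) zn13 gd[OF Q1e Q3e sd13]] unfolding EE_def l_def .
  have E23: "EE e l z2 z3 = 0"
    using poncelet_rel[OF qf2(2) qf3(2) zn23 gd[OF Q2e Q3e sd23]] unfolding EE_def l_def .
  have sig: "z1 + z2 + z3 = of_real ((e^2 - 3 * l + 4) / (2 * e))"
    using sigma_real[OF zn12 zn23 zn13 _ E12 E23 E13] e0 by simp
  have cz1: "cnj z1 = inverse z1" and z10: "z1 \<noteq> 0" using unit_of_norm[OF qf1(2)] by auto
  have cz2: "cnj z2 = inverse z2" and z20: "z2 \<noteq> 0" using unit_of_norm[OF qf2(2)] by auto
  have cz3: "cnj z3 = inverse z3" and z30: "z3 \<noteq> 0" using unit_of_norm[OF qf3(2)] by auto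
  have "cnj (z1 + z2 + z3) = z1 + z2 + z3" unfolding sig by simp
  then have "inverse z1 + inverse z2 + inverse z3 = z1 + z2 + z3" by (simp add: cz1 cz2 cz3)
  then have g: "(z1 + z2 + z3) * (z1 * z2 * z3) = z1 * z2 + z2 * z3 + z3 * z1"
    using z10 z20 z30 by (simp add: field_simps)
  define \<delta>12 where "\<delta>12 = (cmod (z1 - z2))^2"
  define \<delta>13 where "\<delta>13 = (cmod (z1 - z3))^2"
  define \<delta>23 where "\<delta>23 = (cmod (z2 - z3))^2"
  have de12: "of_real \<delta>12 = - ((z1 - z2)^2) / (z1 * z2)" unfolding \<delta>12_def by (rule delta_eq[OF qf1(2) qf2(2)])
  have de13: "of_real \<delta>13 = - ((z1 - z3)^2) / (z1 * z3)" unfolding \<delta>13_def by (rule delta_eq[OF qf1(2) qf3(2)])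
  have de23: "of_real \<delta>23 = - ((z2 - z3)^2) / (z2 * z3)" unfolding \<delta>23_def by (rule delta_eq[OF qf2(2) qf3(2)])
  have dd1: "of_real (\<delta>13 - \<delta>12) = (z3 - z2) * (z1^2 - z2 * z3) / (z1 * z2 * z3)"
    using z10 z20 z30 by (simp add: de12 de13 field_simps power2_eq_square)
  have dd2: "of_real (\<delta>12 - \<delta>23) = (z1 - z3) * (z2^2 - z3 * z1) / (z1 * z2 * z3)"
    using z10 z20 z30 by (simp add: de12 de23 field_simps power2_eq_square)
  have dd3: "of_real (\<delta>23 - \<delta>13) = (z2 - z1) * (z3^2 - z1 * z2) / (z1 * z2 * z3)"
    using z10 z20 z30 by (simp add: de13 de23 field_simps power2_eq_square)
  have sa: "cmod (Q2 - Q3) = \<kappa> * \<delta>23" using sd23 \<delta>23_def by simp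
  have sb: "cmod (Q3 - Q1) = \<kappa> * \<delta>13" using sd13 \<delta>13_def by (simp add: norm_minus_commute)
  have sc: "cmod (Q1 - Q2) = \<kappa> * \<delta>12" using sd12 \<delta>12_def by simp
  have ne1: "\<delta>13 \<noteq> \<delta>12" using h7 unfolding Q1_def[symmetric] Q2_def[symmetric] Q3_def[symmetric] sb sc using kap by simp
  have ne2: "\<delta>12 \<noteq> \<delta>23" using h5 unfolding Q1_def[symmetric] Q2_def[symmetric] Q3_def[symmetric] sa sc using kap by simp
  have ne3: "\<delta>23 \<noteq> \<delta>13" using h6 unfolding Q1_def[symmetric] Q2_def[symmetric] Q3_def[symmetric] sa sb using kap by simp
  have D1: "z1^2 - z2 * z3 \<noteq> 0"
  proof
    assume "z1^2 - z2 * z3 = 0"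
    then have "of_real (\<delta>13 - \<delta>12) = (0::complex)" unfolding dd1 by simp
    then show False using ne1 by simp
  qed
  have D2: "z2^2 - z3 * z1 \<noteq> 0"
  proof
    assume "z2^2 - z3 * z1 = 0"
    then have "of_real (\<delta>12 - \<delta>23) = (0::complex)" unfolding dd2 by simp
    then show False using ne2 by simp
  qed
  have D3: "z3^2 - z1 * z2 \<noteq> 0"
  proof
    assume "z3^2 - z1 * z2 = 0"
    then have "of_real (\<delta>23 - \<delta>13) = (0::complex)" unfolding dd3 by simp
    then show False using ne3 by simp
  qed
  define w1 where "w1 = z1 * (z2 - z3) / (z1^2 - z2 * z3)"
  define w2 where "w2 = z2 * (z3 - z1) / (z2^2 - z3 * z1)"
  define w3 where "w3 = z3 * (z1 - z2) / (z3^2 - z1 * z2)"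
  have fa1: "w1 + w2 + w3 \<noteq> 0"
    unfolding w1_def w2_def w3_def by (rule final_alg(1)[OF z10 z20 z30 zn12 zn23 zn13 g D1 D2 D3])
  have fa2: "w1 * G z1 + w2 * G z2 + w3 * G z3 = (z1 * z2 * z3) * (w1 + w2 + w3)"
    unfolding w1_def w2_def w3_def G_def by (rule final_alg(2)[OF z10 z20 z30 zn12 zn23 zn13 g D1 D2 D3])
  have W1: "of_real (cmod (Q2 - Q3) / (cmod (Q3 - Q1) - cmod (Q1 - Q2))) = w1"
  proof -
    have "cmod (Q2 - Q3) / (cmod (Q3 - Q1) - cmod (Q1 - Q2)) = \<delta>23 / (\<delta>13 - \<delta>12)"
      unfolding sa sb sc using kap by (simp add: right_diff_distrib[symmetric])
    then have "of_real (cmod (Q2 - Q3) / (cmod (Q3 - Q1) - cmod (Q1 - Q2))) = (of_real (\<delta>23 / (\<delta>13 - \<delta>12)) :: complex)"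
      by (simp only:)
    also have "\<dots> = of_real \<delta>23 / of_real (\<delta>13 - \<delta>12)" by (rule of_real_divide)
    also have "\<dots> = w1"
    proof -
      have Y0: "(z3 - z2) * (z1^2 - z2 * z3) / (z1 * z2 * z3) \<noteq> 0" using z10 z20 z30 zn23 D1 by simp
      have "- ((z2 - z3)^2) / (z2 * z3) = w1 * ((z3 - z2) * (z1^2 - z2 * z3) / (z1 * z2 * z3))"
        unfolding w1_def using z10 z20 z30 D1 by (simp add: field_simps power2_eq_square)
      then show ?thesis unfolding de23 dd1 by (rule div_helper[OF Y0])
    qed
    finally show ?thesis .
  qed
  have W2: "of_real (cmod (Q3 - Q1) / (cmod (Q1 - Q2) - cmod (Q2 - Q3))) = w2"
  proof -
    have "cmod (Q3 - Q1) / (cmod (Q1 - Q2) - cmod (Q2 - Q3)) = \<delta>13 / (\<delta>12 - \<delta>23)"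
      unfolding sa sb sc using kap by (simp add: right_diff_distrib[symmetric])
    then have "of_real (cmod (Q3 - Q1) / (cmod (Q1 - Q2) - cmod (Q2 - Q3))) = (of_real (\<delta>13 / (\<delta>12 - \<delta>23)) :: complex)"
      by (simp only:)
    also have "\<dots> = of_real \<delta>13 / of_real (\<delta>12 - \<delta>23)" by (rule of_real_divide)
    also have "\<dots> = w2"
    proof -
      have Y0: "(z1 - z3) * (z2^2 - z3 * z1) / (z1 * z2 * z3) \<noteq> 0" using z10 z20 z30 zn13 D2 by simp
      have "- ((z1 - z3)^2) / (z1 * z3) = w2 * ((z1 - z3) * (z2^2 - z3 * z1) / (z1 * z2 * z3))"
        unfolding w2_def using z10 z20 z30 D2 by (simp add: field_simps power2_eq_square)
      then show ?thesis unfolding de13 dd2 by (rule div_helper[OF Y0])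
    qed
    finally show ?thesis .
  qed
  have W3: "of_real (cmod (Q1 - Q2) / (cmod (Q2 - Q3) - cmod (Q3 - Q1))) = w3"
  proof -
    have "cmod (Q1 - Q2) / (cmod (Q2 - Q3) - cmod (Q3 - Q1)) = \<delta>12 / (\<delta>23 - \<delta>13)"
      unfolding sa sb sc using kap by (simp add: right_diff_distrib[symmetric])
    then have "of_real (cmod (Q1 - Q2) / (cmod (Q2 - Q3) - cmod (Q3 - Q1))) = (of_real (\<delta>12 / (\<delta>23 - \<delta>13)) :: complex)"
      by (simp only:)
    also have "\<dots> = of_real \<delta>12 / of_real (\<delta>23 - \<delta>13)" by (rule of_real_divide)
    also have "\<dots> = w3"
    proof -
      have Y0: "(z2 - z1) * (z3^2 - z1 * z2) / (z1 * z2 * z3) \<noteq> 0" using z10 z20 z30 zn12 D3 by simp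
      have "- ((z1 - z2)^2) / (z1 * z2) = w3 * ((z2 - z1) * (z3^2 - z1 * z2) / (z1 * z2 * z3))"
        unfolding w3_def using z10 z20 z30 D3 by (simp add: field_simps power2_eq_square)
      then show ?thesis unfolding de12 dd3 by (rule div_helper[OF Y0])
    qed
    finally show ?thesis .
  qed
  have X: "X100 Q1 Q2 Q3 = (w1 * Q1 + w2 * Q2 + w3 * Q3) / (w1 + w2 + w3)"
    unfolding X100_def Let_def from_barycentrics_def of_real_add W1 W2 W3 ..
  have num: "w1 * Q1 + w2 * Q2 + w3 * Q3 = Cc * (w1 + w2 + w3) + of_real K * (w1 * G z1 + w2 * G z2 + w3 * G z3)"
    unfolding Q1e Q2e Q3e by (simp add: algebra_simps)
  also have "\<dots> = (Cc + of_real K * (z1 * z2 * z3)) * (w1 + w2 + w3)"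
    unfolding fa2 by (simp add: algebra_simps)
  finally have "X100 Q1 Q2 Q3 - Cc = of_real K * (z1 * z2 * z3)"
    unfolding X using fa1 by simp
  moreover have "cmod (of_real K * (z1 * z2 * z3)) = K"
    using K0 qf1(2) qf2(2) qf3(2) by (simp add: norm_mult)
  ultimately show ?thesis unfolding Q1_def Q2_def Q3_def Cc_def K_def by simp
qed

theorem mainTheorem16:
  fixes a b \<rho> :: real and P1 P2 P3 :: complex
  assumes "a > b" and "b > 0" and "\<rho> > 0"
    and "three_periodic a b P1 P2 P3"
    and "cmod (inversion (- of_real (sqrt (a^2 - b^2))) \<rho> P1 - inversion (- of_real (sqrt (a^2 - b^2))) \<rho> P2)
         \<noteq> cmod (inversion (- of_real (sqrt (a^2 - b^2))) \<rho> P2 - inversion (- of_real (sqrt (a^2 - b^2))) \<rho> P3)"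
    and "cmod (inversion (- of_real (sqrt (a^2 - b^2))) \<rho> P2 - inversion (- of_real (sqrt (a^2 - b^2))) \<rho> P3)
         \<noteq> cmod (inversion (- of_real (sqrt (a^2 - b^2))) \<rho> P3 - inversion (- of_real (sqrt (a^2 - b^2))) \<rho> P1)"
    and "cmod (inversion (- of_real (sqrt (a^2 - b^2))) \<rho> P3 - inversion (- of_real (sqrt (a^2 - b^2))) \<rho> P1)
         \<noteq> cmod (inversion (- of_real (sqrt (a^2 - b^2))) \<rho> P1 - inversion (- of_real (sqrt (a^2 - b^2))) \<rho> P2)"
  shows "cmod (X100 (inversion (- of_real (sqrt (a^2 - b^2))) \<rho> P1)
                    (inversion (- of_real (sqrt (a^2 - b^2))) \<rho> P2)
                    (inversion (- of_real (sqrt (a^2 - b^2))) \<rho> P3)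
               - Complex (- sqrt (a^2 - b^2) * (1 + \<rho>^2 / b^2)) 0)
         = \<rho>^2 * a / b^2"
  proof -
  have c0: "sqrt (a^2 - b^2) > 0" using assms(1,2) by (simp add: power_strict_mono)
  have c1: "sqrt (a^2 - b^2) < a"
  proof -
    have "a^2 - b^2 < a^2" using assms(2) by simp
    then have "sqrt (a^2 - b^2) < sqrt (a^2)" by (rule real_sqrt_less_mono)
    then show ?thesis using assms(1,2) by simp
  qed
  have c2: "(sqrt (a^2 - b^2))^2 = a^2 - b^2" using assms(1,2)
    by (simp add: power_strict_mono less_imp_le)
  show ?thesis
    by (rule main_gen[OF assms(1,2,3) c0 c1 c2 assms(4-7)])
qed

end
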